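(* For $1\le m<n$ and every bounded continuous $f:\mathbb R^m\to\mathbb R$, \[\mathbb E\big[f(\hat D_1,\dots,\hat D_m)\mathbf 1\{N^n\ge m\}\big]=\mathbb E\big[f(\xi_1^*,\dots,\xi_m^* )\,\Theta_m^n(\xi_1^*,\dots,\xi_m^* )\big],\] where \[\Theta_m^n(k_1,\dots,k_m)=\frac{\mathbb P\big(\Xi_{n-m}=n-1-\sum_{i=1}^mk_i\big)}{\mathbb P(\Xi_n=n-1)}\prod_{i=1}^m\frac{n-i+1}{n-1-\sum_{j=1}^{i-1}k_j}.\]
   Context: Let $\xi$ be an $\mathbb N_0$-valued random variable with $\mathbb E[\xi]=1$ and $\gcd\{k:\mathbb P(\xi=k)>0\}=1$; let $\Xi_r$ denote a sum of $r$ i.i.d. copies of $\xi$, and let $n$ be such that $\mathbb P(\Xi_n=n-1)>0$. Let $\xi_1^*,\xi_2^*,\dots$ be i.i.d. with the size-biased law $\mathbb P(\xi^*=k)=k\,\mathbb P(\xi=k)$. Let $\mathbf D=(D_1,\dots,D_n)$ have the law of $n$ i.i.d. copies of $\xi$ conditioned to have sum $n-1$, and, conditionally on $\mathbf D$, let $w=(w_1,\dots,w_{n-1})$ be uniform on the set of sequences in $[n]^{n-1}$ in which each $i\in[n]$ appears exactly $D_i$ times. Let $M$ be the number of distinct entries of $w$ (equal to $N^n:=\#\{i:D_i>0\}$). Define $I_1=1$ and $I_{k+1}=\min\{i:w_i\notin\{w_{I_1},\dots,w_{I_k}\}\}$ for $k<M$, set $\Sigma(k)=w_{I_k}$, and $\hat{\mathbf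 D}=(\hat D_1,\dots,\hat D_n)=(D_{\Sigma(1)},\dots,D_{\Sigma(M)},0,\dots,0)$. *)

theory Defs
  imports "HOL-Probability.Probability"
begin

definition Xi_pmf :: "nat pmf \<Rightarrow> nat \<Rightarrow> nat pmf" where
  "Xi_pmf p r = map_pmf (\<lambda>x. \<Sum>i\<in>{1..r}. x i) (Pi_pmf {1..r} 0 (\<lambda>_. p))"

definition size_biased :: "nat pmf \<Rightarrow> nat pmf" where
  "size_biased p = embed_pmf (\<lambda>k. real k * pmf p k)"

definition D_pmf :: "nat pmf \<Rightarrow> nat \<Rightarrow> (nat \<Rightarrow> nat) pmf" where
  "D_pmf p n = cond_pmf (Pi_pmf {1..n} 0 (\<lambda>_. p)) {d. (\<Sum>i\<in>{1..n}. d i) = n - 1}"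

definition words :: "nat \<Rightarrow> (nat \<Rightarrow> nat) \<Rightarrow> nat list set" where
  "words n d = {w. length w = n - 1 \<and> set w \<subseteq> {1..n} \<and> (\<forall>i\<in>{1..n}. count_list w i = d i)}"

definition Dw_pmf :: "nat pmf \<Rightarrow> nat \<Rightarrow> ((nat \<Rightarrow> nat) \<times> nat list) pmf" where
  "Dw_pmf p n = bind_pmf (D_pmf p n) (\<lambda>d. map_pmf (\<lambda>w. (d, w)) (pmf_of_set (words n d)))"

text \<open>The list [I_1, ..., I_k] of positions of first appearances, stored 0-based
  (list position j corresponds to the paper's index j+1). The first element is position 0,
  i.e. I_1 = 1 in the paper's 1-based convention.\<close>
fun Iseq :: "nat list \<Rightarrow> nat \<Rightarrow> nat list" where
  "Iseq w 0 = []"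
| "Iseq w (Suc k) = Iseq w k @ [LEAST i. i < length w \<and> w ! i \<notin> (\<lambda>j. w ! j) ` set (Iseq w k)]"

definition Sigma :: "nat list \<Rightarrow> nat \<Rightarrow> nat" where
  "Sigma w k = w ! (Iseq w k ! (k - 1))"

definition Dhat :: "(nat \<Rightarrow> nat) \<Rightarrow> nat list \<Rightarrow> nat \<Rightarrow> nat" where
  "Dhat d w i = (if 1 \<le> i \<and> i \<le> card (set w) then d (Sigma w i) else 0)"

definition Nn :: "nat \<Rightarrow> (nat \<Rightarrow> nat) \<Rightarrow> nat" where
  "Nn n d = card {i\<in>{1..n}. d i > 0}"

text \<open>Theta^n_m(k_1,...,k_m).  The probability P(Xi_{n-m} = n-1-sum k) is 0 when the
  target is negative.\<close>
definition Theta :: "nat pmf \<Rightarrow> nat \<Rightarrow> nat \<Rightarrow> (nat \<Rightarrow> nat) \<Rightarrow> real" where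
  "Theta p n m k =
     (if (\<Sum>i\<in>{1..m}. k i) \<le> n - 1
      then pmf (Xi_pmf p (n - m)) (n - 1 - (\<Sum>i\<in>{1..m}. k i)) else 0)
     / pmf (Xi_pmf p n) (n - 1)
     * (\<Prod>i\<in>{1..m}. (real n - real i + 1) / (real n - 1 - (\<Sum>j\<in>{1..<i}. real (k j))))"

text \<open>R^m embedded as functions nat => real vanishing outside {1..m}
  (product topology = Euclidean topology on this subspace).\<close>
definition Rm :: "nat \<Rightarrow> (nat \<Rightarrow> real) set" where
  "Rm m = {x. \<forall>i. i \<notin> {1..m} \<longrightarrow> x i = 0}"

end

theory Submission
  imports Defs "HOL-Combinatorics.Multiset_Permutations"
begin


fun fa :: "nat set \<Rightarrow> nat list \<Rightarrow> nat list" where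
  "fa S [] = []"
| "fa S (x # xs) = (if x \<in> S then fa S xs else x # fa (insert x S) xs)"

lemma set_fa: "set (fa S w) = set w - S"
  by (induction S w rule: fa.induct) auto

lemma distinct_fa: "distinct (fa S w)"
  by (induction S w rule: fa.induct) (auto simp: set_fa)

lemma length_fa: "length (fa {} w) = card (set w)"
  using distinct_card[OF distinct_fa, of "{}" w] by (simp add: set_fa)

lemma fa_nth:
  "k < length (fa S w) \<Longrightarrow> fa S w ! k = hd (filter (\<lambda>x. x \<notin> S \<union> set (take k (fa S w))) w)"
proof (induction S w arbitrary: k rule: fa.induct)
  case (1 S) then show ?case by simp
next
  case (2 S x xs)
  show ?case
  proof (cases "x \<in> S")
    case True then show ?thesis using 2 by simp
  next
    case False
    show ?thesis
    proof (cases k)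
      case 0 then show ?thesis using False by simp
    next
      case (Suc k')
      have kl: "k' < length (fa (insert x S) xs)" using 2(3) False Suc by simp
      have e1: "fa S (x # xs) ! k = fa (insert x S) xs ! k'" using False Suc by simp
      have e2: "filter (\<lambda>y. y \<notin> S \<union> set (take k (fa S (x # xs)))) (x # xs)
          = filter (\<lambda>y. y \<notin> insert x S \<union> set (take k' (fa (insert x S) xs))) xs"
      proof -
        have t: "take k (fa S (x # xs)) = x # take k' (fa (insert x S) xs)" using False Suc by simp
        have f: "\<And>Q ys. \<not> Q x \<Longrightarrow> filter Q (x # ys) = filter Q ys" by simp
        show ?thesis unfolding t
          by (subst f) (simp, rule filter_cong, auto)
      qed
      have IH': "fa (insert x S) xs ! k' = hd (filter (\<lambda>y. y \<notin> insert x S \<union> set (take k' (fa (insert x S) xs))) xs)"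
        using "2.IH"(2)[OF False kl] .
      show ?thesis unfolding e1 e2 by (fact IH')
    qed
  qed
qed

lemma hd_filter_Least:
  assumes "\<exists>x\<in>set w. P x"
  shows "hd (filter P w) = w ! (LEAST i. i < length w \<and> P (w ! i))"
  using assms
proof (induction w)
  case Nil then show ?case by simp
next
  case (Cons a w)
  show ?case
  proof (cases "P a")
    case True
    have "(LEAST i. i < length (a # w) \<and> P ((a # w) ! i)) = 0"
      using True by (intro Least_equality) auto
    then show ?thesis using True by simp
  next
    case False
    then have ex: "\<exists>x\<in>set w. P x" using Cons.prems by auto
    then obtain j where j: "j < length w" "P (w ! j)" by (metis in_set_conv_nth)
    have "(LEAST i. i < length (a # w) \<and> P ((a # w) ! i)) = Suc (LEAST i. i < length w \<and> P (w ! i))"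
      using Least_Suc[of "\<lambda>i. i < length (a # w) \<and> P ((a # w) ! i)" "Suc j"] False j by simp
    then show ?thesis using False Cons.IH[OF ex] by simp
  qed
qed

lemma length_Iseq: "length (Iseq w k) = k"
  by (induction k) auto

lemma Iseq_fa: "k \<le> card (set w) \<Longrightarrow> map (\<lambda>j. w ! j) (Iseq w k) = take k (fa {} w)"
proof (induction k)
  case 0 then show ?case by simp
next
  case (Suc k)
  have IH: "map (\<lambda>j. w ! j) (Iseq w k) = take k (fa {} w)" using Suc by simp
  have kl: "k < length (fa {} w)" using Suc.prems length_fa by simp
  have im: "(\<lambda>j. w ! j) ` set (Iseq w k) = set (take k (fa {} w))"
  proof -
    have "set (map (\<lambda>j. w ! j) (Iseq w k)) = set (take k (fa {} w))" by (simp only: IH)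
    then show ?thesis by (simp only: list.set_map)
  qed
  have ex: "\<exists>x\<in>set w. x \<notin> set (take k (fa {} w))"
  proof -
    have "fa {} w ! k \<in> set w" using nth_mem[OF kl] set_fa[of "{}" w] by simp
    moreover have "fa {} w ! k \<notin> set (take k (fa {} w))"
      proof
        assume "fa {} w ! k \<in> set (take k (fa {} w))"
        moreover have "distinct (take k (fa {} w) @ fa {} w ! k # drop (Suc k) (fa {} w))"
          using distinct_fa[of "{}" w] by (subst (asm) id_take_nth_drop[OF kl]) assumption
        ultimately show False by simp
      qed
    ultimately show ?thesis by blast
  qed
  have "w ! (LEAST i. i < length w \<and> w ! i \<notin> (\<lambda>j. w ! j) ` set (Iseq w k)) = fa {} w ! k"
    unfolding im using hd_filter_Least[OF ex] fa_nth[OF kl] by simp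
  then show ?case using IH kl by (simp add: take_Suc_conv_app_nth)
qed

lemma Sigma_fa: "1 \<le> i \<Longrightarrow> i \<le> card (set w) \<Longrightarrow> Sigma w i = fa {} w ! (i - 1)"
proof -
  assume a: "1 \<le> i" "i \<le> card (set w)"
  have "Sigma w i = map (\<lambda>j. w ! j) (Iseq w i) ! (i - 1)"
    unfolding Sigma_def using a length_Iseq[of w i] by simp
  also have "\<dots> = take i (fa {} w) ! (i - 1)" using Iseq_fa[OF a(2)] by simp
  also have "\<dots> = fa {} w ! (i - 1)" using a by simp
  finally show ?thesis .
qed



fun rho :: "nat multiset \<Rightarrow> nat set \<Rightarrow> nat list \<Rightarrow> real" where
  "rho A S [] = 1"
| "rho A S (a # s) = real (count A a) / real (size (filter_mset (\<lambda>x. x \<notin> S) A)) * rho A (insert a S) s"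

lemma filter_mset_cong_outside:
  assumes "\<And>x. x \<notin> S \<Longrightarrow> count A x = count B x"
  shows "filter_mset (\<lambda>x. x \<notin> S) A = filter_mset (\<lambda>x. x \<notin> S) B"
  using assms by (intro multiset_eqI) auto

lemma rho_cong:
  assumes "\<And>x. x \<notin> S \<Longrightarrow> count A x = count B x" "set s \<inter> S = {}" "distinct s"
  shows "rho A S s = rho B S s"
  using assms
proof (induction s arbitrary: S)
  case Nil then show ?case by simp
next
  case (Cons a s)
  have "rho A (insert a S) s = rho B (insert a S) s" using Cons.prems by (intro Cons.IH) auto
  moreover have "count A a = count B a" using Cons.prems by auto
  moreover have "filter_mset (\<lambda>x. x \<notin> S) A = filter_mset (\<lambda>x. x \<notin> S) B"
    by (rule filter_mset_cong_outside[OF Cons.prems(1)])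
  ultimately show ?case
  proof -
    assume h: "rho A (insert a S) s = rho B (insert a S) s" "count A a = count B a"
      "filter_mset (\<lambda>x. x \<notin> S) A = filter_mset (\<lambda>x. x \<notin> S) B"
    show ?thesis using h by simp
  qed
qed

lemma size_filter_mset_sum:
  "size (filter_mset P A) = (\<Sum>x\<in>{x\<in>set_mset A. P x}. count A x)"
  by (simp add: size_multiset_overloaded_eq)

lemma comb_count:
  assumes "distinct s" "set s \<inter> S = {}"
  shows "real (card {w \<in> permutations_of_multiset A. take (length s) (fa S w) = s})
       = real (card (permutations_of_multiset A)) * rho A S s"
  using assms
proof (induction "size A" arbitrary: A S s rule: less_induct)
  case less
  show ?case
  proof (cases s)
    case Nil then show ?thesis by simp
  next
    case (Cons a s')
    show ?thesis
    proof (cases "A = {#}")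
      case True
      then show ?thesis using Cons by simp
    next
      case ne: False
      define P where "P = (\<lambda>w. take (length s) (fa S w) = s)"
      define T where "T = (\<lambda>B::nat multiset. real (card (permutations_of_multiset B)))"
      define r' where "r' = rho A (insert a S) s'"
      define LS where "LS = real (size (filter_mset (\<lambda>x. x \<notin> S) A))"
      have aS: "a \<notin> S" using less.prems Cons by auto
      have rho_eq: "rho A S s = real (count A a) / LS * r'"
        using Cons by (simp add: r'_def LS_def)
      have dec: "{w \<in> permutations_of_multiset A. P w}
          = (\<Union>x\<in>set_mset A. (#) x ` {w' \<in> permutations_of_multiset (A - {#x#}). P (x # w')})"
        unfolding permutations_of_multiset_nonempty[OF ne] by auto
      have "card {w \<in> permutations_of_multiset A. P w}
          = (\<Sum>x\<in>set_mset A. card ((#) x ` {w' \<in> permutations_of_multiset (A - {#x#}). P (x # w')}))"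
        unfolding dec by (rule card_UN_disjoint) auto
      also have "\<dots> = (\<Sum>x\<in>set_mset A. card {w' \<in> permutations_of_multiset (A - {#x#}). P (x # w')})"
        by (intro sum.cong refl card_image) (auto simp: inj_on_def)
      finally have c1: "real (card {w \<in> permutations_of_multiset A. P w})
          = (\<Sum>x\<in>set_mset A. real (card {w' \<in> permutations_of_multiset (A - {#x#}). P (x # w')}))"
        by simp
      have sz: "\<And>x. x \<in># A \<Longrightarrow> size (A - {#x#}) < size A"
        by (rule size_Diff1_less)
      have Tx: "\<And>x. x \<in># A \<Longrightarrow> T (A - {#x#}) = T A * real (count A x) / real (size A)"
        unfolding T_def by (subst real_card_permutations_of_multiset_remove) auto
      have tm: "real (card {w' \<in> permutations_of_multiset (A - {#x#}). P (x # w')})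
          = (if x \<in> S then T A * real (count A x) / real (size A) * rho A S s
             else if x = a then T A * real (count A x) / real (size A) * r' else 0)"
        if x: "x \<in># A" for x
      proof (cases "x \<in> S")
        case True
        have "P (x # w') = P w'" for w' using True by (simp add: P_def)
        then have "real (card {w' \<in> permutations_of_multiset (A - {#x#}). P (x # w')})
            = real (card {w' \<in> permutations_of_multiset (A - {#x#}). P w'})" by simp
        also have "\<dots> = T (A - {#x#}) * rho (A - {#x#}) S s"
          unfolding P_def T_def by (rule less.hyps[OF sz[OF x] less.prems])
        also have "rho (A - {#x#}) S s = rho A S s"
          using True less.prems by (intro rho_cong) auto
        finally show ?thesis using True Tx[OF x] by simp
      next
        case False
        have "P (x # w') = (x = a \<and> take (length s') (fa (insert x S) w') = s')" for w'
          using False Cons by (auto simp: P_def)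
        show ?thesis
        proof (cases "x = a")
          case True
          have "real (card {w' \<in> permutations_of_multiset (A - {#x#}). P (x # w')})
            = real (card {w' \<in> permutations_of_multiset (A - {#x#}). take (length s') (fa (insert x S) w') = s'})"
            using \<open>\<And>w'. P (x # w') = _\<close> True by simp
          also have "\<dots> = T (A - {#x#}) * rho (A - {#x#}) (insert x S) s'"
            unfolding T_def using less.prems Cons True by (intro less.hyps[OF sz[OF x]]) auto
          also have "rho (A - {#x#}) (insert x S) s' = r'"
            unfolding r'_def True using less.prems Cons by (intro rho_cong) auto
          finally show ?thesis using False True Tx[OF x] by simp
        next
          case xa: False
          then show ?thesis using \<open>\<And>w'. P (x # w') = _\<close> False by simp
        qed
      qed
      have c2: "real (card {w \<in> permutations_of_multiset A. P w})
          = (\<Sum>x\<in>set_mset A. (if x \<in> S then T A * real (count A x) / real (size A) * rho A S s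
             else if x = a then T A * real (count A x) / real (size A) * r' else 0))"
        unfolding c1 by (intro sum.cong refl tm) auto
      have N: "real (size A) > 0" using ne by (simp add: nonempty_has_size)
      have sumS: "(\<Sum>x\<in>set_mset A. (if x \<in> S then real (count A x) else 0)) = real (size A) - LS"
      proof -
        have "real (size A) = (\<Sum>x\<in>set_mset A. real (count A x))"
          by (simp add: size_multiset_overloaded_eq)
        also have "\<dots> = (\<Sum>x\<in>set_mset A. (if x \<in> S then real (count A x) else 0))
                       + (\<Sum>x\<in>set_mset A. (if x \<notin> S then real (count A x) else 0))"
          by (subst sum.distrib[symmetric]) (intro sum.cong refl, auto)
        also have "(\<Sum>x\<in>set_mset A. (if x \<notin> S then real (count A x) else 0)) = LS"
          unfolding LS_def size_filter_mset_sum of_nat_sum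
          by (subst sum.inter_filter[symmetric]) auto
        finally show ?thesis by simp
      qed
      have c3: "(\<Sum>x\<in>set_mset A. (if x \<in> S then T A * real (count A x) / real (size A) * rho A S s
             else if x = a then T A * real (count A x) / real (size A) * r' else 0))
          = T A / real (size A) * rho A S s * (\<Sum>x\<in>set_mset A. (if x \<in> S then real (count A x) else 0))
            + (\<Sum>x\<in>set_mset A. (if x = a then T A * real (count A x) / real (size A) * r' else 0))"
      proof -
        have "(\<Sum>x\<in>set_mset A. (if x \<in> S then T A * real (count A x) / real (size A) * rho A S s
             else if x = a then T A * real (count A x) / real (size A) * r' else 0))
          = (\<Sum>x\<in>set_mset A. (if x \<in> S then T A / real (size A) * rho A S s * real (count A x) else 0)
              + (if x = a then T A * real (count A x) / real (size A) * r' else 0))"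
          using aS by (intro sum.cong refl) auto
        also have "\<dots> = (\<Sum>x\<in>set_mset A. (if x \<in> S then T A / real (size A) * rho A S s * real (count A x) else 0))
              + (\<Sum>x\<in>set_mset A. (if x = a then T A * real (count A x) / real (size A) * r' else 0))"
          by (rule sum.distrib)
        also have "(\<Sum>x\<in>set_mset A. (if x \<in> S then T A / real (size A) * rho A S s * real (count A x) else 0))
            = T A / real (size A) * rho A S s * (\<Sum>x\<in>set_mset A. (if x \<in> S then real (count A x) else 0))"
          unfolding sum_distrib_left by (intro sum.cong refl) auto
        finally show ?thesis .
      qed
      have c4: "(\<Sum>x\<in>set_mset A. (if x = a then T A * real (count A x) / real (size A) * r' else 0))
          = T A * real (count A a) / real (size A) * r'"
        by (cases "a \<in># A") (simp_all add: sum.delta not_in_iff)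
      have "real (card {w \<in> permutations_of_multiset A. P w})
          = T A / real (size A) * rho A S s * (real (size A) - LS) + T A * real (count A a) / real (size A) * r'"
        using c2 c3 c4 sumS by simp
      also have "\<dots> = T A * rho A S s"
      proof (cases "LS = 0")
        case True
        have "count A a \<le> size (filter_mset (\<lambda>x. x \<notin> S) A)"
          using aS by (metis count_filter_mset count_le_size)
        moreover have "size (filter_mset (\<lambda>x. x \<notin> S) A) = 0"
          using True unfolding LS_def by (simp only: of_nat_eq_0_iff)
        ultimately have "count A a = 0" by linarith
        then show ?thesis using rho_eq True by simp
      next
        case False
        have N': "real (size A) \<noteq> 0" using N by linarith
        show ?thesis unfolding rho_eq using False N' by (simp add: field_simps)
      qed
      finally show ?thesis unfolding P_def T_def .
    qed
  qed
qed



definition Eset :: "nat set \<Rightarrow> nat \<Rightarrow> (nat \<Rightarrow> nat) set" where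
  "Eset R s = {e. (\<forall>i. i \<notin> R \<longrightarrow> e i = 0) \<and> (\<Sum>i\<in>R. e i) = s}"

lemma finite_Eset: "finite R \<Longrightarrow> finite (Eset R s)"
proof -
  assume R: "finite R"
  have "Eset R s \<subseteq> PiE_dflt R 0 (\<lambda>_. {..s})"
  proof
    fix e assume e: "e \<in> Eset R s"
    have "e i \<le> s" if "i \<in> R" for i
      using e that R unfolding Eset_def by (auto intro: member_le_sum[of i R e, simplified])
    then show "e \<in> PiE_dflt R 0 (\<lambda>_. {..s})" using e unfolding Eset_def PiE_dflt_def by auto
  qed
  moreover have "finite (PiE_dflt R 0 (\<lambda>_. {..s}))" using R by (intro finite_PiE_dflt) auto
  ultimately show ?thesis by (rule finite_subset)
qed

lemma measure_sum_eq:
  assumes R: "finite R"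
  shows "measure (Pi_pmf R 0 (\<lambda>_. p)) {x. (\<Sum>i\<in>R. x i) = s} = (\<Sum>e\<in>Eset R s. \<Prod>i\<in>R. pmf p (e i))"
proof -
  define M where "M = Pi_pmf R 0 (\<lambda>_. p)"
  have sub: "set_pmf M \<subseteq> {f. \<forall>x. x \<notin> R \<longrightarrow> f x = 0}" unfolding M_def by (rule set_Pi_pmf_subset[OF R])
  have "{x. (\<Sum>i\<in>R. x i) = s} \<inter> set_pmf M = Eset R s \<inter> set_pmf M"
    using sub unfolding Eset_def by blast
  then have "measure M {x. (\<Sum>i\<in>R. x i) = s} = measure M (Eset R s)"
    by (metis measure_Int_set_pmf)
  also have "\<dots> = (\<Sum>e\<in>Eset R s. pmf M e)" by (rule measure_measure_pmf_finite[OF finite_Eset[OF R]])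
  also have "\<dots> = (\<Sum>e\<in>Eset R s. \<Prod>i\<in>R. pmf p (e i))"
    unfolding M_def by (intro sum.cong refl pmf_Pi'[OF R]) (auto simp: Eset_def)
  finally show ?thesis unfolding M_def .
qed

lemma Xi_pmf_measure: "pmf (Xi_pmf p r) s = measure (Pi_pmf {1..r} 0 (\<lambda>_. p)) {x. (\<Sum>i\<in>{1..r}. x i) = s}"
  unfolding Xi_pmf_def pmf_map by (simp add: vimage_def)

lemma Xi_pmf_card:
  fixes R :: "nat set"
  assumes R: "finite R" and c: "card R = r"
  shows "measure (Pi_pmf R 0 (\<lambda>_. p)) {x. (\<Sum>i\<in>R. x i) = s} = pmf (Xi_pmf p r) s"
proof -
  obtain h where h: "bij_betw h {1..r} R"
    using c R by (metis card_atLeastAtMost diff_Suc_1 finite_atLeastAtMost finite_same_card_bij)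
  define h' where "h' = (\<lambda>x. if x \<in> {1..r} then h x else Max R + 1 + x)"
  have h': "bij_betw h' {1..r} R" using h unfolding h'_def by (rule bij_betw_cong[THEN iffD1, rotated]) auto
  have out: "h' x \<notin> R" if "x \<notin> {1..r}" for x
  proof
    assume "h' x \<in> R"
    then have "h' x \<le> Max R" using R by simp
    moreover have "h' x = Max R + 1 + x" using that unfolding h'_def by auto
    ultimately show False by simp
  qed
  have "pmf (Xi_pmf p r) s = measure (Pi_pmf {1..r} 0 (\<lambda>_. p)) {x. (\<Sum>i\<in>{1..r}. x i) = s}"
    by (rule Xi_pmf_measure)
  also have "Pi_pmf {1..r} 0 (\<lambda>_. p) = map_pmf (\<lambda>g. g \<circ> h') (Pi_pmf R 0 (\<lambda>_. p))"
    by (rule Pi_pmf_bij_betw[OF _ h' out]) auto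
  also have "measure (map_pmf (\<lambda>g. g \<circ> h') (Pi_pmf R 0 (\<lambda>_. p))) {x. (\<Sum>i\<in>{1..r}. x i) = s}
      = measure (Pi_pmf R 0 (\<lambda>_. p)) ((\<lambda>g. g \<circ> h') -` {x. (\<Sum>i\<in>{1..r}. x i) = s})"
    by (rule measure_map_pmf)
  also have "(\<lambda>g. g \<circ> h') -` {x. (\<Sum>i\<in>{1..r}. x i) = s} = {x. (\<Sum>i\<in>R. x i) = s}"
  proof -
    have "(\<Sum>i\<in>{1..r}. g (h' i)) = (\<Sum>i\<in>R. g i)" for g :: "nat \<Rightarrow> nat"
      by (rule sum.reindex_bij_betw[OF h'])
    then show ?thesis by auto
  qed
  finally show ?thesis ..
qed

lemma Xi_pmf_Eset:
  fixes R :: "nat set"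
  assumes R: "finite R" and c: "card R = r"
  shows "pmf (Xi_pmf p r) s = (\<Sum>e\<in>Eset R s. \<Prod>i\<in>R. pmf p (e i))"
  using Xi_pmf_card[OF R c] measure_sum_eq[OF R] by simp



definition kap :: "nat \<Rightarrow> nat list \<Rightarrow> (nat \<Rightarrow> nat) \<Rightarrow> nat \<Rightarrow> nat" where
  "kap m s d = (\<lambda>i. if i \<in> {1..m} then d (s ! (i - 1)) else 0)"

lemma bij_nth_shift:
  assumes "distinct s" "length s = m"
  shows "bij_betw (\<lambda>i. s ! (i - 1)) {1..m} (set s)"
proof (rule bij_betwI')
  fix x y assume "x \<in> {1..m}" "y \<in> {1..m}"
  then show "(s ! (x - 1) = s ! (y - 1)) = (x = y)"
    using assms by (auto simp: nth_eq_iff_index_eq)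
next
  fix x assume "x \<in> {1..m}" then show "s ! (x - 1) \<in> set s" using assms by auto
next
  fix y assume "y \<in> set s"
  then obtain j where "j < length s" "y = s ! j" by (metis in_set_conv_nth)
  then show "\<exists>x\<in>{1..m}. y = s ! (x - 1)" using assms by (intro bexI[of _ "Suc j"]) auto
qed

lemma split_sum:
  fixes N :: "nat set"
  assumes N: "finite N" and s: "distinct s" "length s = m" "set s \<subseteq> N"
    and k: "\<And>i. i \<notin> {1..m} \<Longrightarrow> k i = 0"
  shows "(\<Sum>d\<in>{d\<in>Eset N L. kap m s d = k}. \<Prod>i\<in>N. pmf p (d i))
       = (\<Prod>i\<in>{1..m}. pmf p (k i)) *
         (if (\<Sum>i\<in>{1..m}. k i) \<le> L then pmf (Xi_pmf p (card N - m)) (L - (\<Sum>i\<in>{1..m}. k i)) else 0)"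
proof -
  define g where "g = (\<lambda>i. s ! (i - 1))"
  have g: "bij_betw g {1..m} (set s)" unfolding g_def by (rule bij_nth_shift[OF s(1,2)])
  define R where "R = N - set s"
  have R: "finite R" using N unfolding R_def by simp
  have cR: "card R = card N - m" unfolding R_def using N s by (simp add: card_Diff_subset distinct_card)
  have NR: "N = set s \<union> R" "set s \<inter> R = {}" using s unfolding R_def by auto
  define K where "K = (\<Sum>i\<in>{1..m}. k i)"
  have kapg: "kap m s d = k \<longleftrightarrow> (\<forall>i\<in>{1..m}. d (g i) = k i)" for d
    unfolding kap_def g_def using k by (auto simp: fun_eq_iff)
  have sum_s: "(\<Sum>j\<in>set s. d j) = K" if "kap m s d = k" for d
  proof -
    have "(\<Sum>j\<in>set s. d j) = (\<Sum>i\<in>{1..m}. d (g i))" by (rule sum.reindex_bij_betw[OF g, symmetric])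
    also have "\<dots> = K" unfolding K_def using that kapg by (intro sum.cong) auto
    finally show ?thesis .
  qed
  have sumN: "(\<Sum>j\<in>N. d j) = (\<Sum>j\<in>set s. d j) + (\<Sum>j\<in>R. d j)" for d :: "nat \<Rightarrow> nat"
    unfolding NR(1) using R NR(2) by (intro sum.union_disjoint) auto
  have prodN: "(\<Prod>j\<in>N. pmf p (d j)) = (\<Prod>j\<in>set s. pmf p (d j)) * (\<Prod>j\<in>R. pmf p (d j))" for d :: "nat \<Rightarrow> nat"
    unfolding NR(1) using R NR(2) by (intro prod.union_disjoint) auto
  show ?thesis
  proof (cases "K \<le> L")
    case False
    have emp: "{d\<in>Eset N L. kap m s d = k} = {}"
    proof (rule ccontr)
      assume "{d\<in>Eset N L. kap m s d = k} \<noteq> {}"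
      then obtain d where d: "d \<in> Eset N L" "kap m s d = k" by blast
      have "L = (\<Sum>j\<in>N. d j)" using d(1) unfolding Eset_def by simp
      also have "\<dots> \<ge> K" unfolding sumN sum_s[OF d(2)] by simp
      finally show False using False by simp
    qed
    show ?thesis unfolding emp using False unfolding K_def by simp
  next
    case True
    define d0 where "d0 = (\<lambda>j. if j \<in> set s then k (the_inv_into {1..m} g j) else 0)"
    have d0g: "d0 (g i) = k i" if "i \<in> {1..m}" for i
    proof -
      have "g i \<in> set s" using g that by (auto simp: bij_betw_def)
      moreover have "the_inv_into {1..m} g (g i) = i"
        using g that by (intro the_inv_into_f_f) (auto simp: bij_betw_def)
      ultimately show ?thesis unfolding d0_def by simp
    qed
    define psi where "psi = (\<lambda>e j. if j \<in> R then e j else d0 j)"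
    have kap_psi: "kap m s (psi e) = k" for e
    proof -
      have "\<forall>i\<in>{1..m}. psi e (g i) = k i"
      proof
        fix i assume i: "i \<in> {1..m}"
        have "g i \<in> set s" using g i by (auto simp: bij_betw_def)
        then have "g i \<notin> R" unfolding R_def by simp
        then show "psi e (g i) = k i" unfolding psi_def using d0g[OF i] by simp
      qed
      then show ?thesis using kapg by blast
    qed
    have inj: "inj_on psi (Eset R (L - K))"
    proof (rule inj_onI)
      fix e1 e2 assume e: "e1 \<in> Eset R (L - K)" "e2 \<in> Eset R (L - K)" "psi e1 = psi e2"
      show "e1 = e2"
      proof
        fix j show "e1 j = e2 j"
        proof (cases "j \<in> R")
          case True then show ?thesis using fun_cong[OF e(3), of j] unfolding psi_def by simp
        next
          case False then show ?thesis using e(1,2) unfolding Eset_def by simp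
        qed
      qed
    qed
    have img: "{d\<in>Eset N L. kap m s d = k} = psi ` Eset R (L - K)"
    proof (intro equalityI subsetI)
      fix d assume d: "d \<in> {d\<in>Eset N L. kap m s d = k}"
      define e where "e = (\<lambda>j. if j \<in> R then d j else 0)"
      have "(\<Sum>j\<in>R. e j) = (\<Sum>j\<in>R. d j)" unfolding e_def by simp
      also have "\<dots> = L - K" using d sumN[of d] sum_s[of d] unfolding Eset_def by auto
      finally have eE: "e \<in> Eset R (L - K)" unfolding Eset_def e_def by simp
      have "psi e = d"
      proof
        fix j show "psi e j = d j"
        proof (cases "j \<in> R")
          case True then show ?thesis unfolding psi_def e_def by simp
        next
          case False
          show ?thesis
          proof (cases "j \<in> set s")
            case True
            moreover have "set s = g ` {1..m}" using g by (simp add: bij_betw_def)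
            ultimately obtain i where i: "i \<in> {1..m}" "j = g i" by blast
            have "d (g i) = k i" using d kapg i by blast
            then show ?thesis using False d0g[OF i(1)] i(2) unfolding psi_def by simp
          next
            case jn: False
            then have "j \<notin> N" using False NR by blast
            then show ?thesis using d False jn unfolding psi_def d0_def Eset_def by simp
          qed
        qed
      qed
      then show "d \<in> psi ` Eset R (L - K)" using eE by blast
    next
      fix d assume "d \<in> psi ` Eset R (L - K)"
      then obtain e where e: "e \<in> Eset R (L - K)" "d = psi e" by blast
      have out: "d j = 0" if "j \<notin> N" for j
      proof -
        have "j \<notin> R" "j \<notin> set s" using that NR by auto
        then show ?thesis unfolding e(2) psi_def d0_def by simp
      qed
      have kd: "kap m s d = k" unfolding e(2) by (rule kap_psi)
      have "(\<Sum>j\<in>R. d j) = (\<Sum>j\<in>R. e j)" unfolding e(2) psi_def by simp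
      also have "\<dots> = L - K" using e(1) unfolding Eset_def by simp
      finally have "(\<Sum>j\<in>N. d j) = L" unfolding sumN sum_s[OF kd] using True by simp
      then show "d \<in> {d\<in>Eset N L. kap m s d = k}" using out kd unfolding Eset_def by simp
    qed
    have ps: "(\<Prod>j\<in>set s. pmf p (psi e j)) = (\<Prod>i\<in>{1..m}. pmf p (k i))" for e
    proof -
      have "(\<Prod>j\<in>set s. pmf p (psi e j)) = (\<Prod>i\<in>{1..m}. pmf p (psi e (g i)))"
        by (rule prod.reindex_bij_betw[OF g, symmetric])
      also have "\<dots> = (\<Prod>i\<in>{1..m}. pmf p (k i))"
        using kap_psi[of e] kapg by (intro prod.cong) auto
      finally show ?thesis .
    qed
    have pR: "(\<Prod>j\<in>R. pmf p (psi e j)) = (\<Prod>j\<in>R. pmf p (e j))" for e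
      unfolding psi_def by simp
    have "(\<Sum>d\<in>{d\<in>Eset N L. kap m s d = k}. \<Prod>i\<in>N. pmf p (d i))
        = (\<Sum>e\<in>Eset R (L - K). \<Prod>i\<in>N. pmf p (psi e i))"
      unfolding img by (rule sum.reindex[OF inj, unfolded comp_def])
    also have "\<dots> = (\<Sum>e\<in>Eset R (L - K). (\<Prod>i\<in>{1..m}. pmf p (k i)) * (\<Prod>j\<in>R. pmf p (e j)))"
      unfolding prodN ps pR by simp
    also have "\<dots> = (\<Prod>i\<in>{1..m}. pmf p (k i)) * pmf (Xi_pmf p (card N - m)) (L - K)"
      unfolding sum_distrib_left[symmetric] using Xi_pmf_Eset[OF R cR] by simp
    finally show ?thesis using True unfolding K_def by simp
  qed
qed



lemma filter_insert_split:
  assumes "a \<notin> S"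
  shows "size (filter_mset (\<lambda>x. x \<notin> S) A) = size (filter_mset (\<lambda>x. x \<notin> insert a S) A) + count A a"
proof -
  have "filter_mset (\<lambda>x. x \<notin> S) A = filter_mset (\<lambda>x. x \<notin> insert a S) A + replicate_mset (count A a) a"
    using assms by (intro multiset_eqI) auto
  then show ?thesis by simp
qed

lemma rho_closed:
  "distinct s \<Longrightarrow> set s \<inter> S = {} \<Longrightarrow> rho A S s =
     (\<Prod>i<length s. real (count A (s ! i)) /
        (real (size (filter_mset (\<lambda>x. x \<notin> S) A)) - (\<Sum>j<i. real (count A (s ! j)))))"
proof (induction s arbitrary: S)
  case Nil then show ?case by simp
next
  case (Cons a s)
  have aS: "a \<notin> S" using Cons.prems by auto
  define LS where "LS = real (size (filter_mset (\<lambda>x. x \<notin> S) A))"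
  have LS': "real (size (filter_mset (\<lambda>x. x \<notin> insert a S) A)) = LS - real (count A a)"
    unfolding LS_def filter_insert_split[OF aS] by simp
  have IH: "rho A (insert a S) s = (\<Prod>i<length s. real (count A (s ! i)) /
        (LS - real (count A a) - (\<Sum>j<i. real (count A (s ! j)))))"
    using Cons.IH[of "insert a S"] Cons.prems LS' by auto
  have "(\<Prod>i<length (a # s). real (count A ((a # s) ! i)) / (LS - (\<Sum>j<i. real (count A ((a # s) ! j)))))
      = real (count A a) / LS * (\<Prod>i<length s. real (count A (s ! i)) / (LS - (\<Sum>j<Suc i. real (count A ((a # s) ! j)))))"
    unfolding length_Cons prod.lessThan_Suc_shift by (simp del: prod.lessThan_Suc sum.lessThan_Suc)
  also have "(\<Prod>i<length s. real (count A (s ! i)) / (LS - (\<Sum>j<Suc i. real (count A ((a # s) ! j)))))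
      = (\<Prod>i<length s. real (count A (s ! i)) / (LS - real (count A a) - (\<Sum>j<i. real (count A (s ! j)))))"
    by (intro prod.cong refl) (simp add: sum.lessThan_Suc_shift del: sum.lessThan_Suc)
  finally show ?case using IH unfolding LS_def by simp
qed

definition Ad :: "nat \<Rightarrow> (nat \<Rightarrow> nat) \<Rightarrow> nat multiset" where
  "Ad n d = (\<Sum>i\<in>{1..n}. replicate_mset (d i) i)"

lemma count_Ad: "count (Ad n d) x = (if x \<in> {1..n} then d x else 0)"
  unfolding Ad_def count_sum by (simp add: sum.delta)

lemma size_Ad: "size (Ad n d) = (\<Sum>i\<in>{1..n}. d i)"
  unfolding Ad_def by simp

lemma words_perm:
  assumes "d \<in> Eset {1..n} (n - 1)"
  shows "words n d = permutations_of_multiset (Ad n d)"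
proof (intro equalityI subsetI)
  fix w assume w: "w \<in> words n d"
  have "mset w = Ad n d"
  proof (rule multiset_eqI)
    fix x
    show "count (mset w) x = count (Ad n d) x"
    proof (cases "x \<in> {1..n}")
      case True then show ?thesis using w unfolding words_def by (simp add: count_Ad count_mset)
    next
      case False
      then have "x \<notin> set w" using w unfolding words_def by auto
      then show ?thesis using False by (auto simp: count_Ad count_mset count_list_0_iff)
    qed
  qed
  then show "w \<in> permutations_of_multiset (Ad n d)" by (rule permutations_of_multisetI)
next
  fix w assume "w \<in> permutations_of_multiset (Ad n d)"
  then have m: "mset w = Ad n d" by (rule permutations_of_multisetD)
  have "length w = n - 1"
    using arg_cong[OF m, of size] assms unfolding Eset_def by (simp add: size_Ad)
  moreover have "set w \<subseteq> {1..n}"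
  proof
    fix x assume "x \<in> set w"
    then have "count (mset w) x > 0" by simp
    then show "x \<in> {1..n}" unfolding m count_Ad by (simp split: if_splits)
  qed
  moreover have "\<forall>i\<in>{1..n}. count_list w i = d i"
    using m by (metis count_Ad count_mset)
  ultimately show "w \<in> words n d" unfolding words_def by blast
qed

definition RH :: "nat \<Rightarrow> nat \<Rightarrow> (nat \<Rightarrow> nat) \<Rightarrow> real" where
  "RH n m k = (\<Prod>i\<in>{1..m}. real (k i) / (real n - 1 - (\<Sum>j\<in>{1..<i}. real (k j))))"

lemma rho_Ad:
  assumes d: "d \<in> Eset {1..n} (n - 1)" and n: "1 \<le> n"
    and s: "length s = m" "distinct s" "set s \<subseteq> {1..n}"
  shows "rho (Ad n d) {} s = RH n m (kap m s d)"
proof -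
  have sz: "real (size (filter_mset (\<lambda>x. x \<notin> {}) (Ad n d))) = real n - 1"
    using d n unfolding Eset_def by (simp add: size_Ad of_nat_diff)
  have sz2: "real (size (Ad n d)) = real n - 1"
    using d n unfolding Eset_def by (simp add: size_Ad of_nat_diff)
  have cnt: "count (Ad n d) (s ! i) = d (s ! i)" if "i < m" for i
    using that s unfolding count_Ad by (auto dest: nth_mem)
  have "rho (Ad n d) {} s = (\<Prod>i<m. real (d (s ! i)) / (real n - 1 - (\<Sum>j<i. real (d (s ! j)))))"
    unfolding rho_closed[OF s(2), of "{}", simplified] sz s(1)
    by (intro prod.cong refl) (simp add: cnt sz2)
  also have "\<dots> = RH n m (kap m s d)"
    unfolding RH_def prod.atLeast1_atMost_eq[of _ m, unfolded One_nat_def[symmetric]]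
  proof (intro prod.cong refl)
    fix i assume i: "i \<in> {..<m}"
    have "(\<Sum>j\<in>{1..<Suc i}. real (kap m s d j)) = (\<Sum>j\<in>{0..<i}. real (kap m s d (Suc j)))"
      using sum.atLeast_Suc_lessThan_Suc_shift[of "\<lambda>j. real (kap m s d j)" 0 i] by (simp add: comp_def)
    also have "\<dots> = (\<Sum>j<i. real (d (s ! j)))"
      using i by (intro sum.cong) (auto simp: kap_def)
    finally have eqS: "(\<Sum>j\<in>{1..<Suc i}. real (kap m s d j)) = (\<Sum>j<i. real (d (s ! j)))" .
    have kS: "kap m s d (Suc i) = d (s ! i)" using i by (simp add: kap_def)
    show "real (d (s ! i)) / (real n - 1 - (\<Sum>j<i. real (d (s ! j))))
        = real (kap m s d (Suc i)) / (real n - 1 - (\<Sum>j\<in>{1..<Suc i}. real (kap m s d j)))"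
      by (simp only: eqS kS)
  qed
  finally show ?thesis .
qed

lemma card_Inj_real:
  "m \<le> n \<Longrightarrow> real (\<Prod>{n - m + 1..n}) = (\<Prod>i\<in>{1..m}. (real n - real i + 1))"
proof (induction m)
  case 0 then show ?case by simp
next
  case (Suc m)
  have e: "{n - Suc m + 1..n} = insert (n - m) {n - m + 1..n}"
    using Suc.prems by (auto simp: atLeastAtMost_def)
  have "real (\<Prod>{n - Suc m + 1..n}) = real (n - m) * real (\<Prod>{n - m + 1..n})"
    unfolding e by simp
  also have "\<dots> = (real n - real (Suc m) + 1) * (\<Prod>i\<in>{1..m}. (real n - real i + 1))"
    using Suc by (simp add: of_nat_diff)
  also have "\<dots> = (\<Prod>i\<in>{1..Suc m}. (real n - real i + 1))"
    by (simp add: prod.cl_ivl_Suc)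
  finally show ?case .
qed



lemma sb_pmf:
  assumes mean: "measure_pmf.expectation p real = 1"
  shows "pmf (size_biased p) k = real k * pmf p k"
proof -
  have int: "integrable p real"
    using mean not_integrable_integral_eq by fastforce
  have "(\<integral>\<^sup>+x. ennreal (real x * pmf p x) \<partial>count_space UNIV) = (\<integral>\<^sup>+x. ennreal (real x) \<partial>measure_pmf p)"
    unfolding nn_integral_measure_pmf by (intro nn_integral_cong) (simp add: ennreal_mult mult.commute)
  also have "\<dots> = ennreal (measure_pmf.expectation p real)"
    by (rule nn_integral_eq_integral[OF int]) auto
  also have "\<dots> = 1" using mean by simp
  finally have prob: "(\<integral>\<^sup>+x. ennreal (real x * pmf p x) \<partial>count_space UNIV) = 1" .
  show ?thesis unfolding size_biased_def
    by (rule pmf_embed_pmf[OF _ prob]) simp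
qed



lemma card_set_words:
  assumes "w \<in> words n d"
  shows "card (set w) = Nn n d"
proof -
  have "x \<in> set w \<longleftrightarrow> x \<in> {1..n} \<and> d x > 0" for x
  proof (cases "x \<in> {1..n}")
    case True
    have c: "count_list w x = d x" using True assms unfolding words_def by auto
    have "x \<in> set w \<longleftrightarrow> count_list w x \<noteq> 0" by (simp add: count_list_0_iff)
    then show ?thesis using c True by simp
  next
    case False
    then show ?thesis using assms unfolding words_def by auto
  qed
  then have "set w = {i\<in>{1..n}. d i > 0}" by blast
  then show ?thesis unfolding Nn_def by simp
qed

lemma inner_sum:
  fixes f :: "(nat \<Rightarrow> real) \<Rightarrow> real"
  assumes d: "d \<in> Eset {1..n} (n - 1)" and n: "1 \<le> n"
  shows "(\<Sum>w\<in>words n d. f (\<lambda>i. if i \<in> {1..m} then real (Dhat d w i) else 0) * (if Nn n d \<ge> m then 1 else 0))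
       = real (card (words n d)) *
         (\<Sum>s\<in>{s. length s = m \<and> distinct s \<and> set s \<subseteq> {1..n}}. f (\<lambda>i. real (kap m s d i)) * RH n m (kap m s d))"
proof -
  define Inj where "Inj = {s. length s = m \<and> distinct s \<and> set s \<subseteq> {1..n}}"
  define W where "W = words n d"
  have Wp: "W = permutations_of_multiset (Ad n d)" unfolding W_def by (rule words_perm[OF d])
  have finW: "finite W" unfolding Wp by simp
  have finI: "finite Inj" unfolding Inj_def
    by (rule finite_subset[OF _ finite_lists_length_eq[OF finite_atLeastAtMost, of 1 n m]]) auto
  define H' where "H' = (\<lambda>s. f (\<lambda>i. real (kap m s d i)))"
  have pt: "f (\<lambda>i. if i \<in> {1..m} then real (Dhat d w i) else 0) * (if Nn n d \<ge> m then 1 else 0)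
      = (\<Sum>s\<in>Inj. if take m (fa {} w) = s then H' s else 0)" if w: "w \<in> W" for w
  proof (cases "Nn n d \<ge> m")
    case True
    have cs: "card (set w) \<ge> m" using True card_set_words w unfolding W_def by simp
    define s0 where "s0 = take m (fa {} w)"
    have s0I: "s0 \<in> Inj"
    proof -
      have "length s0 = m" unfolding s0_def using cs length_fa[of w] by simp
      moreover have "distinct s0" unfolding s0_def using distinct_fa by (rule distinct_take)
      moreover have "set s0 \<subseteq> {1..n}"
      proof -
        have "set s0 \<subseteq> set (fa {} w)" unfolding s0_def by (rule set_take_subset)
        also have "\<dots> = set w" by (simp add: set_fa)
        also have "\<dots> \<subseteq> {1..n}" using w unfolding W_def words_def by blast
        finally show ?thesis .
      qed
      ultimately show ?thesis unfolding Inj_def by blast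
    qed
    have V: "(\<lambda>i. if i \<in> {1..m} then real (Dhat d w i) else 0) = (\<lambda>i. real (kap m s0 d i))"
    proof
      fix i
      show "(if i \<in> {1..m} then real (Dhat d w i) else 0) = real (kap m s0 d i)"
      proof (cases "i \<in> {1..m}")
        case True
        then have "Dhat d w i = d (Sigma w i)" using cs unfolding Dhat_def by auto
        also have "Sigma w i = fa {} w ! (i - 1)" using True cs by (intro Sigma_fa) auto
        also have "\<dots> = s0 ! (i - 1)"
        proof -
          have "i - 1 < m" using True by auto
          then show ?thesis unfolding s0_def by simp
        qed
        finally show ?thesis using True unfolding kap_def by simp
      qed (auto simp: kap_def)
    qed
    have "(\<Sum>s\<in>Inj. if take m (fa {} w) = s then H' s else 0) = H' s0"
      unfolding s0_def[symmetric] using s0I finI by (simp add: sum.delta)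
    then show ?thesis using True V unfolding H'_def by simp
  next
    case False
    have cs: "card (set w) < m" using False card_set_words w unfolding W_def by simp
    have "take m (fa {} w) \<noteq> s" if "s \<in> Inj" for s
    proof -
      have "length (take m (fa {} w)) < m" using cs length_fa[of w] by simp
      then show ?thesis using that unfolding Inj_def by auto
    qed
    then have "(\<Sum>s\<in>Inj. if take m (fa {} w) = s then H' s else 0) = 0" by simp
    then show ?thesis using False by simp
  qed
  have "(\<Sum>w\<in>W. f (\<lambda>i. if i \<in> {1..m} then real (Dhat d w i) else 0) * (if Nn n d \<ge> m then 1 else 0))
      = (\<Sum>w\<in>W. \<Sum>s\<in>Inj. if take m (fa {} w) = s then H' s else 0)"
    by (intro sum.cong refl pt)
  also have "\<dots> = (\<Sum>s\<in>Inj. \<Sum>w\<in>W. if take m (fa {} w) = s then H' s else 0)"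
    by (rule sum.swap)
  also have "\<dots> = (\<Sum>s\<in>Inj. H' s * real (card {w\<in>W. take m (fa {} w) = s}))"
  proof (intro sum.cong refl)
    fix s
    have "(\<Sum>w\<in>W. if take m (fa {} w) = s then H' s else 0) = (\<Sum>w\<in>{w\<in>W. take m (fa {} w) = s}. H' s)"
      by (rule sum.inter_filter[OF finW, symmetric])
    then show "(\<Sum>w\<in>W. if take m (fa {} w) = s then H' s else 0) = H' s * real (card {w\<in>W. take m (fa {} w) = s})"
      by simp
  qed
  also have "\<dots> = (\<Sum>s\<in>Inj. H' s * (real (card W) * RH n m (kap m s d)))"
  proof (intro sum.cong refl)
    fix s assume s: "s \<in> Inj"
    have "real (card {w\<in>W. take m (fa {} w) = s}) = real (card W) * rho (Ad n d) {} s"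
      using comb_count[of s "{}" "Ad n d"] s unfolding Inj_def Wp by simp
    also have "rho (Ad n d) {} s = RH n m (kap m s d)"
      using s unfolding Inj_def by (intro rho_Ad[OF d n]) auto
    finally show "H' s * real (card {w\<in>W. take m (fa {} w) = s}) = H' s * (real (card W) * RH n m (kap m s d))"
      by simp
  qed
  also have "\<dots> = real (card W) * (\<Sum>s\<in>Inj. H' s * RH n m (kap m s d))"
    by (simp add: sum_distrib_left mult_ac)
  finally show ?thesis unfolding W_def Inj_def H'_def .
qed



theorem proposition3p3:
  fixes p :: "nat pmf" and n m :: nat and f :: "(nat \<Rightarrow> real) \<Rightarrow> real"
  assumes mean: "measure_pmf.expectation p real = 1"
    and aper: "Gcd (set_pmf p) = 1"
    and npos: "pmf (Xi_pmf p n) (n - 1) > 0"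
    and m: "1 \<le> m" "m < n"
    and fcont: "continuous_on (Rm m) f"
    and fbdd: "bounded (f ` Rm m)"
  shows "measure_pmf.expectation (Dw_pmf p n)
           (\<lambda>(d, w). f (\<lambda>i. if i \<in> {1..m} then real (Dhat d w i) else 0)
                     * (if Nn n d \<ge> m then 1 else 0))
       = measure_pmf.expectation (Pi_pmf {1..m} 0 (\<lambda>_. size_biased p))
           (\<lambda>k. f (\<lambda>i. real (k i)) * Theta p n m k)"
proof -
  define Pin where "Pin = Pi_pmf {1..n} 0 (\<lambda>_. p)"
  define Z where "Z = pmf (Xi_pmf p n) (n - 1)"
  define Dset where "Dset = Eset {1..n} (n - 1)"
  define W where "W = (\<lambda>d. words n d)"
  define g where "g = (\<lambda>(d, w). f (\<lambda>i. if i \<in> {1..m} then real (Dhat d w i) else 0)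
                     * (if Nn n d \<ge> m then 1 else (0::real)))"
  define Inj where "Inj = {s. length s = m \<and> distinct s \<and> set s \<subseteq> {1..n}}"
  define T where "T = PiE_dflt {1..m} (0::nat) (\<lambda>_. {..n - 1})"
  define Q where "Q = (\<lambda>k. if (\<Sum>i\<in>{1..m}. k i) \<le> n - 1
      then pmf (Xi_pmf p (n - m)) (n - 1 - (\<Sum>i\<in>{1..m}. k i)) else 0)"
  define H where "H = (\<lambda>k. f (\<lambda>i. real (k i)) * RH n m k)"
  define DP where "DP = D_pmf p n"
  have n1: "1 \<le> n" using m by simp
  have Zpos: "Z > 0" using npos unfolding Z_def .
  have finD: "finite Dset" unfolding Dset_def by (rule finite_Eset) simp
  have finI: "finite Inj" unfolding Inj_def
    by (rule finite_subset[OF _ finite_lists_length_eq[OF finite_atLeastAtMost, of 1 n m]]) auto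
  have finT: "finite T" unfolding T_def by (intro finite_PiE_dflt) auto
  have Zmeas: "measure Pin {d. (\<Sum>i\<in>{1..n}. d i) = n - 1} = Z"
    unfolding Z_def Pin_def Xi_pmf_measure ..
  have ne: "set_pmf Pin \<inter> {d. (\<Sum>i\<in>{1..n}. d i) = n - 1} \<noteq> {}"
  proof
    assume "set_pmf Pin \<inter> {d. (\<Sum>i\<in>{1..n}. d i) = n - 1} = {}"
    then have "measure Pin {d. (\<Sum>i\<in>{1..n}. d i) = n - 1} = 0"
      by (metis Int_commute measure_Int_set_pmf measure_empty)
    then show False using Zmeas Zpos by simp
  qed
  have Zsum: "Z = (\<Sum>d\<in>Dset. \<Prod>i\<in>{1..n}. pmf p (d i))"
    unfolding Z_def Dset_def by (rule Xi_pmf_Eset) auto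
  have pmfD: "pmf DP d = (\<Prod>i\<in>{1..n}. pmf p (d i)) / Z" if "d \<in> Dset" for d
  proof -
    have c: "pmf DP d = (if d \<in> {d. (\<Sum>i\<in>{1..n}. d i) = n - 1} then pmf Pin d / measure Pin {d. (\<Sum>i\<in>{1..n}. d i) = n - 1} else 0)"
      unfolding DP_def D_pmf_def Pin_def by (rule pmf_cond[OF ne[unfolded Pin_def]])
    have "pmf DP d = pmf Pin d / Z"
      unfolding c Zmeas using that unfolding Dset_def Eset_def by simp
    also have "pmf Pin d = (\<Prod>i\<in>{1..n}. pmf p (d i))"
      unfolding Pin_def using that unfolding Dset_def Eset_def by (intro pmf_Pi') auto
    finally show ?thesis .
  qed
  have setD: "set_pmf DP \<subseteq> Dset"
  proof
    fix d assume "d \<in> set_pmf DP"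
    moreover have "set_pmf DP = set_pmf Pin \<inter> {d. (\<Sum>i\<in>{1..n}. d i) = n - 1}"
      unfolding DP_def D_pmf_def Pin_def by (rule set_cond_pmf[OF ne[unfolded Pin_def]])
    ultimately have "d \<in> set_pmf Pin" "(\<Sum>i\<in>{1..n}. d i) = n - 1" by auto
    moreover have "set_pmf Pin \<subseteq> {f. \<forall>x. x \<notin> {1..n} \<longrightarrow> f x = 0}"
      unfolding Pin_def by (rule set_Pi_pmf_subset) simp
    ultimately show "d \<in> Dset" unfolding Dset_def Eset_def by blast
  qed
  have Wfin: "finite (W d)" "W d \<noteq> {}" if "d \<in> Dset" for d
    unfolding W_def words_perm[OF that[unfolded Dset_def]] by simp_all
  have DwDef: "Dw_pmf p n = bind_pmf DP (\<lambda>d. map_pmf (\<lambda>w. (d, w)) (pmf_of_set (W d)))"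
    unfolding Dw_pmf_def DP_def W_def ..
  have setDw: "set_pmf (Dw_pmf p n) \<subseteq> Product_Type.Sigma Dset W"
  proof
    fix x assume "x \<in> set_pmf (Dw_pmf p n)"
    then obtain d w where x: "x = (d, w)" "d \<in> set_pmf DP" "w \<in> set_pmf (pmf_of_set (W d))"
      unfolding DwDef by auto
    have "d \<in> Dset" using x(2) setD by blast
    then show "x \<in> Product_Type.Sigma Dset W" using x Wfin by auto
  qed
  have pmfDw: "pmf (Dw_pmf p n) (d, w) = pmf DP d / real (card (W d))" if "d \<in> Dset" "w \<in> W d" for d w
  proof -
    have "pmf (Dw_pmf p n) (d, w) = (\<integral>d'. pmf (map_pmf (\<lambda>w. (d', w)) (pmf_of_set (W d'))) (d, w) \<partial>measure_pmf DP)"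
      unfolding DwDef pmf_bind ..
    also have "\<dots> = (\<Sum>a\<in>{d}. pmf (map_pmf (\<lambda>w. (a, w)) (pmf_of_set (W a))) (d, w) * pmf DP a)"
    proof (rule integral_measure_pmf_real)
      fix a assume "a \<in> set_pmf DP" "pmf (map_pmf (\<lambda>w. (a, w)) (pmf_of_set (W a))) (d, w) \<noteq> 0"
      then have "(d, w) \<in> set_pmf (map_pmf (\<lambda>w. (a, w)) (pmf_of_set (W a)))" by (simp add: set_pmf_eq)
      then show "a \<in> {d}" by auto
    qed simp
    also have "\<dots> = pmf (map_pmf (\<lambda>w. (d, w)) (pmf_of_set (W d))) (d, w) * pmf DP d" by simp
    also have "pmf (map_pmf (\<lambda>w. (d, w)) (pmf_of_set (W d))) (d, w) = pmf (pmf_of_set (W d)) w"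
      by (rule pmf_map_inj') (auto simp: inj_def)
    also have "\<dots> = 1 / real (card (W d))" using Wfin[OF that(1)] that(2) by simp
    finally show ?thesis by simp
  qed
  have "measure_pmf.expectation (Dw_pmf p n) g = (\<Sum>x\<in>Product_Type.Sigma Dset W. g x * pmf (Dw_pmf p n) x)"
    by (rule integral_measure_pmf_real) (use finD Wfin setDw in auto)
  also have "\<dots> = (\<Sum>d\<in>Dset. \<Sum>w\<in>W d. g (d, w) * pmf (Dw_pmf p n) (d, w))"
    using sum.Sigma[OF finD, of W "\<lambda>d w. g (d, w) * pmf (Dw_pmf p n) (d, w)"] Wfin by simp
  also have "\<dots> = (\<Sum>d\<in>Dset. (\<Prod>i\<in>{1..n}. pmf p (d i)) / Z * (\<Sum>s\<in>Inj. H (kap m s d)))"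
  proof (intro sum.cong refl)
    fix d assume d: "d \<in> Dset"
    have "(\<Sum>w\<in>W d. g (d, w) * pmf (Dw_pmf p n) (d, w)) = (\<Sum>w\<in>W d. g (d, w)) * (pmf DP d / real (card (W d)))"
      unfolding sum_distrib_right using pmfDw[OF d] by (intro sum.cong refl) auto
    also have "(\<Sum>w\<in>W d. g (d, w)) = real (card (W d)) * (\<Sum>s\<in>Inj. H (kap m s d))"
      unfolding g_def W_def Inj_def H_def using inner_sum[OF d[unfolded Dset_def] n1, of f m] by simp
    finally show "(\<Sum>w\<in>W d. g (d, w) * pmf (Dw_pmf p n) (d, w)) = (\<Prod>i\<in>{1..n}. pmf p (d i)) / Z * (\<Sum>s\<in>Inj. H (kap m s d))"
      using pmfD[OF d] Wfin[OF d] by (simp add: card_gt_0_iff)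
  qed
  also have "\<dots> = (\<Sum>s\<in>Inj. \<Sum>d\<in>Dset. (\<Prod>i\<in>{1..n}. pmf p (d i)) * H (kap m s d)) / Z"
  proof -
    have "(\<Sum>d\<in>Dset. (\<Prod>i\<in>{1..n}. pmf p (d i)) / Z * (\<Sum>s\<in>Inj. H (kap m s d)))
        = (\<Sum>d\<in>Dset. \<Sum>s\<in>Inj. (\<Prod>i\<in>{1..n}. pmf p (d i)) * H (kap m s d) / Z)"
      by (intro sum.cong refl) (simp add: sum_distrib_left)
    also have "\<dots> = (\<Sum>s\<in>Inj. \<Sum>d\<in>Dset. (\<Prod>i\<in>{1..n}. pmf p (d i)) * H (kap m s d) / Z)"
      by (rule sum.swap)
    also have "\<dots> = (\<Sum>s\<in>Inj. \<Sum>d\<in>Dset. (\<Prod>i\<in>{1..n}. pmf p (d i)) * H (kap m s d)) / Z"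
      by (simp add: sum_divide_distrib)
    finally show ?thesis .
  qed
  also have "\<dots> = (\<Sum>s\<in>Inj. \<Sum>k\<in>T. H k * ((\<Prod>i\<in>{1..m}. pmf p (k i)) * Q k)) / Z"
  proof -
    have "(\<Sum>d\<in>Dset. (\<Prod>i\<in>{1..n}. pmf p (d i)) * H (kap m s d)) = (\<Sum>k\<in>T. H k * ((\<Prod>i\<in>{1..m}. pmf p (k i)) * Q k))"
      if s: "s \<in> Inj" for s
    proof -
      have img: "kap m s ` Dset \<subseteq> T"
      proof
        fix k assume "k \<in> kap m s ` Dset"
        then obtain d where d: "d \<in> Dset" "k = kap m s d" by blast
        have "d (s ! (i - 1)) \<le> n - 1" if "i \<in> {1..m}" for i
        proof -
          have "i - 1 < length s" using s that unfolding Inj_def by auto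
          then have "s ! (i - 1) \<in> set s" by (rule nth_mem)
          then have "s ! (i - 1) \<in> {1..n}" using s unfolding Inj_def by blast
          then have "d (s ! (i - 1)) \<le> (\<Sum>j\<in>{1..n}. d j)" by (intro member_le_sum) auto
          then show ?thesis using d(1) unfolding Dset_def Eset_def by simp
        qed
        then show "k \<in> T" unfolding d(2) T_def PiE_dflt_def kap_def by auto
      qed
      have "(\<Sum>d\<in>Dset. (\<Prod>i\<in>{1..n}. pmf p (d i)) * H (kap m s d))
          = (\<Sum>k\<in>T. \<Sum>d\<in>{d\<in>Dset. kap m s d = k}. (\<Prod>i\<in>{1..n}. pmf p (d i)) * H (kap m s d))"
        by (rule sum.group[OF finD finT img, symmetric])
      also have "\<dots> = (\<Sum>k\<in>T. H k * (\<Sum>d\<in>{d\<in>Dset. kap m s d = k}. \<Prod>i\<in>{1..n}. pmf p (d i)))"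
        by (intro sum.cong refl) (auto simp: sum_distrib_left mult_ac)
      also have "\<dots> = (\<Sum>k\<in>T. H k * ((\<Prod>i\<in>{1..m}. pmf p (k i)) * Q k))"
      proof (intro sum.cong refl)
        fix k assume k: "k \<in> T"
        have "(\<Sum>d\<in>{d\<in>Dset. kap m s d = k}. \<Prod>i\<in>{1..n}. pmf p (d i)) = (\<Prod>i\<in>{1..m}. pmf p (k i)) * Q k"
          unfolding Dset_def Q_def
          using split_sum[of "{1..n}" s m k, where L="n - 1" and p=p] s k unfolding Inj_def T_def PiE_dflt_def by auto
        then show "H k * (\<Sum>d\<in>{d\<in>Dset. kap m s d = k}. \<Prod>i\<in>{1..n}. pmf p (d i)) = H k * ((\<Prod>i\<in>{1..m}. pmf p (k i)) * Q k)"
          by simp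
      qed
      finally show ?thesis .
    qed
    then show ?thesis by simp
  qed
  also have "\<dots> = real (card Inj) * (\<Sum>k\<in>T. H k * ((\<Prod>i\<in>{1..m}. pmf p (k i)) * Q k)) / Z"
    by simp
  finally have LHS: "measure_pmf.expectation (Dw_pmf p n) g = real (card Inj) * (\<Sum>k\<in>T. H k * ((\<Prod>i\<in>{1..m}. pmf p (k i)) * Q k)) / Z" .
  have RHS: "measure_pmf.expectation (Pi_pmf {1..m} 0 (\<lambda>_. size_biased p)) (\<lambda>k. f (\<lambda>i. real (k i)) * Theta p n m k)
      = (\<Sum>k\<in>T. f (\<lambda>i. real (k i)) * Theta p n m k * (\<Prod>i\<in>{1..m}. real (k i) * pmf p (k i)))"
  proof -
    have "measure_pmf.expectation (Pi_pmf {1..m} 0 (\<lambda>_. size_biased p)) (\<lambda>k. f (\<lambda>i. real (k i)) * Theta p n m k)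
        = (\<Sum>k\<in>T. f (\<lambda>i. real (k i)) * Theta p n m k * pmf (Pi_pmf {1..m} 0 (\<lambda>_. size_biased p)) k)"
    proof (rule integral_measure_pmf_real[OF finT])
      fix a assume a: "a \<in> set_pmf (Pi_pmf {1..m} 0 (\<lambda>_. size_biased p))" "f (\<lambda>i. real (a i)) * Theta p n m a \<noteq> 0"
      have out: "\<forall>x. x \<notin> {1..m} \<longrightarrow> a x = 0" using set_Pi_pmf_subset[of "{1..m}" 0 "\<lambda>_. size_biased p"] a(1) by auto
      have "Theta p n m a \<noteq> 0" using a(2) by auto
      then have le: "(\<Sum>i\<in>{1..m}. a i) \<le> n - 1" unfolding Theta_def by (auto split: if_splits)
      have "a i \<le> n - 1" if "i \<in> {1..m}" for i
        using member_le_sum[of i "{1..m}" a] that le by simp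
      then show "a \<in> T" using out unfolding T_def PiE_dflt_def by auto
    qed
    also have "\<dots> = (\<Sum>k\<in>T. f (\<lambda>i. real (k i)) * Theta p n m k * (\<Prod>i\<in>{1..m}. real (k i) * pmf p (k i)))"
    proof (intro sum.cong refl)
      fix k assume k: "k \<in> T"
      have "pmf (Pi_pmf {1..m} 0 (\<lambda>_. size_biased p)) k = (\<Prod>i\<in>{1..m}. pmf (size_biased p) (k i))"
        using k unfolding T_def PiE_dflt_def by (intro pmf_Pi') auto
      also have "\<dots> = (\<Prod>i\<in>{1..m}. real (k i) * pmf p (k i))" by (simp add: sb_pmf[OF mean])
      finally show "f (\<lambda>i. real (k i)) * Theta p n m k * pmf (Pi_pmf {1..m} 0 (\<lambda>_. size_biased p)) k
          = f (\<lambda>i. real (k i)) * Theta p n m k * (\<Prod>i\<in>{1..m}. real (k i) * pmf p (k i))" by simp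
    qed
    finally show ?thesis .
  qed
  have cardI: "real (card Inj) = (\<Prod>i\<in>{1..m}. (real n - real i + 1))"
  proof -
    have "card Inj = \<Prod>{card {1..n} - m + 1..card {1..n}}"
      unfolding Inj_def using m by (subst card_lists_distinct_length_eq) (auto simp: conj_commute)
    then show ?thesis using card_Inj_real[of m n] m by simp
  qed
  have tmk: "real (card Inj) * (H k * ((\<Prod>i\<in>{1..m}. pmf p (k i)) * Q k)) / Z
      = f (\<lambda>i. real (k i)) * Theta p n m k * (\<Prod>i\<in>{1..m}. real (k i) * pmf p (k i))" for k
  proof -
    define Dn where "Dn = (\<lambda>i. real n - 1 - (\<Sum>j\<in>{1..<i}. real (k j)))"
    have Th: "Theta p n m k = Q k / Z * (\<Prod>i\<in>{1..m}. (real n - real i + 1) / Dn i)"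
      unfolding Theta_def Q_def Z_def Dn_def ..
    have RHk: "RH n m k = (\<Prod>i\<in>{1..m}. real (k i)) / (\<Prod>i\<in>{1..m}. Dn i)"
      unfolding RH_def Dn_def by (rule prod_dividef)
    show ?thesis
      unfolding Th H_def RHk cardI prod_dividef prod.distrib
      by (simp add: field_simps)
  qed
  have "measure_pmf.expectation (Dw_pmf p n) g
      = (\<Sum>k\<in>T. f (\<lambda>i. real (k i)) * Theta p n m k * (\<Prod>i\<in>{1..m}. real (k i) * pmf p (k i)))"
    unfolding LHS sum_distrib_left sum_divide_distrib using tmk by simp
  then show ?thesis unfolding RHS[symmetric] g_def .
qed


end
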